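(* Let $\xi_1,\dots,\xi_n$ be independent random variables taking values in $\mathbb{Z}_+=\{0,1,2,\dots\}$, where for each $i$ the probability generating function $\psi_{\xi_i}$ satisfies $$\frac{\psi'_{\xi_i}(w)}{\psi_{\xi_i}(w)}=\sum_{j=0}^{\infty} g_{i,j+1}w^j$$ for real coefficients $g_{i,j+1}$, the series converging absolutely. Let $W_n=\sum_{i=1}^n\xi_i$ and $\mu=\sum_{i=1}^n\sum_{j=0}^\infty g_{i,j+1}$. Then a Stein operator for $W_n$ is $$\mathscr{A}_{W_n}h(j)=\mu\, h(j+1)-j\,h(j)+\sum_{i=1}^{n}\sum_{k=0}^{\infty}\sum_{l=1}^{k}g_{i,k+1}\,\Delta h(j+l),\qquad j\in\mathbb{Z}_+,$$ that is, $\mathbb{E}[\mathscr{A}_{W_n}h(W_n)]=0$ for all $h\in H_{W_n}$.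
   Context: $\Delta h(j)=h(j+1)-h(j)$ is the forward difference. $H$ denotes the set of bounded functions $h:\mathbb{Z}_+\to\mathbb{R}$, and for a random variable $\bar X$, $H_{\bar X}=\{h\in H: h(0)=0 \text{ and } h(j)=0 \text{ for } j\notin \mathrm{Supp}(\bar X)\}$. A Stein operator for $\bar X$ is an operator $\mathscr{A}_{\bar X}$ on such functions with $\mathbb{E}[\mathscr{A}_{\bar X}h(\bar X)]=0$ for the relevant class of $h$. $\mu$ equals the mean of $W_n$. *)

theory Defs
  imports "HOL-Probability.Probability"
begin

definition pgf :: "'a measure \<Rightarrow> ('a \<Rightarrow> nat) \<Rightarrow> real \<Rightarrow> real" where
  "pgf M X w = (\<integral>\<omega>. w ^ X \<omega> \<partial>M)"

definition supp_rv :: "'a measure \<Rightarrow> ('a \<Rightarrow> nat) \<Rightarrow> nat set" where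
  "supp_rv M X = {j. measure M {\<omega> \<in> space M. X \<omega> = j} > 0}"

definition fdiff :: "(nat \<Rightarrow> real) \<Rightarrow> nat \<Rightarrow> real" where
  "fdiff h j = h (j + 1) - h j"

definition H_class :: "'a measure \<Rightarrow> ('a \<Rightarrow> nat) \<Rightarrow> (nat \<Rightarrow> real) set" where
  "H_class M X = {h. bounded (range h) \<and> h 0 = 0 \<and> (\<forall>j. j \<notin> supp_rv M X \<longrightarrow> h j = 0)}"

definition stein_op :: "real \<Rightarrow> nat \<Rightarrow> (nat \<Rightarrow> nat \<Rightarrow> real) \<Rightarrow> (nat \<Rightarrow> real) \<Rightarrow> nat \<Rightarrow> real" where
  "stein_op \<mu> n g h j =
     \<mu> * h (j + 1) - real j * h j
     + (\<Sum>i=1..n. \<Sum>k. \<Sum>l=1..k. g i (k + 1) * fdiff h (j + l))"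

end

theory Submission
  imports Defs "HOL-Analysis.FPS_Convergence"
begin


lemma L2:
  fixes M :: "'a measure" and X :: "'a \<Rightarrow> nat" and f :: "nat \<Rightarrow> real"
  assumes P: "prob_space M" and X: "X \<in> measurable M (count_space UNIV)"
    and S: "summable (\<lambda>k. \<bar>f k\<bar> * measure M {\<omega>\<in>space M. X \<omega> = k})"
  shows "integrable M (\<lambda>\<omega>. f (X \<omega>))"
    and "(\<integral>\<omega>. f (X \<omega>) \<partial>M) = (\<Sum>k. f k * measure M {\<omega>\<in>space M. X \<omega> = k})"
proof -
  interpret prob_space M by (rule P)
  define A where "A k = {\<omega>\<in>space M. X \<omega> = k}" for k
  have As: "A k \<in> sets M" for k
  proof -
    have "X -` {k} \<inter> space M \<in> sets M" using X by (rule measurable_sets) auto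
    moreover have "X -` {k} \<inter> space M = A k" by (auto simp: A_def)
    ultimately show ?thesis by simp
  qed
  define F where "F k \<omega> = f k * indicator (A k) \<omega>" for k \<omega>
  have intF: "integrable M (F k)" for k
    unfolding F_def using As by (intro integrable_mult_right integrable_real_indicator) (auto simp: less_top[symmetric])
  have sF: "(\<lambda>k. F k \<omega>) sums f (X \<omega>)" if "\<omega> \<in> space M" for \<omega>
  proof -
    have "(\<lambda>k. F k \<omega>) = (\<lambda>k. if k = X \<omega> then f k else 0)"
      using that by (auto simp: F_def A_def indicator_def)
    then show ?thesis using sums_single[of "X \<omega>" f] by simp
  qed
  have AE1: "AE \<omega> in M. summable (\<lambda>k. norm (F k \<omega>))"
  proof (rule AE_I2)
    fix \<omega> assume "\<omega> \<in> space M"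
    have "(\<lambda>k. norm (F k \<omega>)) = (\<lambda>k. if k = X \<omega> then norm (f k) else 0)"
      using \<open>\<omega> \<in> space M\<close> by (auto simp: F_def A_def indicator_def)
    then show "summable (\<lambda>k. norm (F k \<omega>))" by simp
  qed
  have nF: "(\<integral>\<omega>. norm (F k \<omega>) \<partial>M) = \<bar>f k\<bar> * measure M (A k)" for k
    using As by (simp add: F_def abs_mult)
  have iF: "integral\<^sup>L M (F k) = f k * measure M (A k)" for k
  proof -
    have "F k = (\<lambda>\<omega>. f k * indicator (A k) \<omega>)" by (auto simp: F_def)
    then show ?thesis using As by simp
  qed
  have S2: "summable (\<lambda>k. (\<integral>\<omega>. norm (F k \<omega>) \<partial>M))"
    unfolding nF using S by (simp add: A_def)
  have eq: "(\<integral>\<omega>. f (X \<omega>) \<partial>M) = (\<integral>\<omega>. (\<Sum>k. F k \<omega>) \<partial>M)"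
    by (rule Bochner_Integration.integral_cong) (auto simp: sums_unique[OF sF])
  have "integrable M (\<lambda>\<omega>. (\<Sum>k. F k \<omega>))"
    by (rule integrable_suminf[OF intF AE1 S2])
  then show "integrable M (\<lambda>\<omega>. f (X \<omega>))"
    using Bochner_Integration.integrable_cong[of M M "\<lambda>\<omega>. (\<Sum>k. F k \<omega>)" "\<lambda>\<omega>. f (X \<omega>)"]
    by (auto simp: sums_unique[OF sF])
  show "(\<integral>\<omega>. f (X \<omega>) \<partial>M) = (\<Sum>k. f k * measure M {\<omega>\<in>space M. X \<omega> = k})"
    unfolding eq integral_suminf[OF intF AE1 S2] iF A_def ..
qed



lemma ev_norm_lt_radius:
  fixes F :: "real fps"
  assumes "fps_conv_radius F > 0"
  shows "eventually (\<lambda>x::real. ereal (norm x) < fps_conv_radius F) (nhds 0)"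
proof -
  have "open (eball (0::real) (fps_conv_radius F))" by simp
  moreover have "(0::real) \<in> eball 0 (fps_conv_radius F)" 
    unfolding in_eball_iff dist_self zero_ereal_def[symmetric] using assms .
  ultimately have "eventually (\<lambda>x. x \<in> eball (0::real) (fps_conv_radius F)) (nhds 0)"
    by (intro topological_space_class.eventually_nhds_in_open)
  then show ?thesis by eventually_elim (simp add: dist_norm)
qed

lemma fps_eval_nonzero_near0:
  fixes F :: "real fps"
  assumes "F \<noteq> 0" "fps_conv_radius F > 0"
  shows "eventually (\<lambda>x. eval_fps F x \<noteq> 0) (at 0)"
proof -
  define m where "m = subdegree F"
  define Q where "Q = fps_shift m F"
  have rQ: "fps_conv_radius Q = fps_conv_radius F" by (simp add: Q_def)
  have "isCont (eval_fps Q) 0"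
    using assms rQ by (intro continuous_eval_fps) (simp add: zero_ereal_def)
  moreover have "eval_fps Q 0 \<noteq> 0"
    using assms by (simp add: Q_def m_def eval_fps_at_0)
  ultimately have "eventually (\<lambda>x. eval_fps Q x \<noteq> 0) (at 0)"
    unfolding isCont_def by (rule tendsto_imp_eventually_ne)
  moreover have "eventually (\<lambda>x::real. ereal (norm x) < fps_conv_radius F) (at 0)"
    using ev_norm_lt_radius[OF assms(2)] unfolding eventually_at_filter by (auto elim: eventually_mono)
  moreover have "eventually (\<lambda>x. x \<noteq> 0) (at (0::real))"
    by (simp add: eventually_at_filter)
  ultimately show ?thesis
  proof eventually_elim
    case (elim x)
    have "eval_fps Q x = eval_fps F x / x ^ m"
      unfolding Q_def using elim by (subst eval_fps_shift) (auto simp: m_def)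
    then show "eval_fps F x \<noteq> 0" using elim by auto
  qed
qed

lemma fps_unique_real:
  fixes F G :: "real fps"
  assumes "fps_conv_radius F > 0" "fps_conv_radius G > 0"
    and "eventually (\<lambda>x. eval_fps F x = eval_fps G x) (at 0)"
  shows "F = G"
proof (rule ccontr)
  assume "F \<noteq> G"
  then have ne: "F - G \<noteq> 0" by simp
  have r: "fps_conv_radius (F - G) > 0"
    using fps_conv_radius_diff[of F G] assms(1,2) by (auto simp: min_def split: if_splits)
  have "eventually (\<lambda>x. eval_fps (F - G) x \<noteq> 0) (at 0)"
    by (rule fps_eval_nonzero_near0[OF ne r])
  moreover have "eventually (\<lambda>x::real. ereal (norm x) < fps_conv_radius F) (at 0)"
    using ev_norm_lt_radius[OF assms(1)] unfolding eventually_at_filter by (auto elim: eventually_mono)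
  moreover have "eventually (\<lambda>x::real. ereal (norm x) < fps_conv_radius G) (at 0)"
    using ev_norm_lt_radius[OF assms(2)] unfolding eventually_at_filter by (auto elim: eventually_mono)
  ultimately have "eventually (\<lambda>x. False) (at (0::real))"
    using assms(3)
  proof eventually_elim
    case (elim x)
    then show ?case by (simp add: eval_fps_diff)
  qed
  then show False by simp
qed

lemma radius_ge1_bounded:
  fixes p :: "nat \<Rightarrow> real"
  assumes "\<And>k. \<bar>p k\<bar> \<le> 1"
  shows "fps_conv_radius (Abs_fps p) \<ge> 1"
  unfolding fps_conv_radius_def
proof (rule conv_radius_geI_ex')
  fix r :: real assume r: "0 < r" "ereal r < 1"
  have "summable (\<lambda>n. r ^ n)" using r by (intro summable_geometric) auto
  then show "summable (\<lambda>n. fps_nth (Abs_fps p) n * of_real r ^ n)"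
  proof (rule summable_comparison_test'[where N=0])
    fix n :: nat
    have "\<bar>p n\<bar> * r ^ n \<le> 1 * r ^ n" using assms r by (intro mult_right_mono) auto
    then show "norm (fps_nth (Abs_fps p) n * of_real r ^ n) \<le> r ^ n"
      using r by (simp add: abs_mult)
  qed
qed

lemma radius_ge1_abs_summable:
  fixes c :: "nat \<Rightarrow> real"
  assumes "summable (\<lambda>k. \<bar>c k\<bar>)"
  shows "fps_conv_radius (Abs_fps c) \<ge> 1"
proof -
  have "summable (\<lambda>n. fps_nth (Abs_fps c) n * (1::real) ^ n)"
    using summable_rabs_cancel[OF assms] by simp
  then have "conv_radius (fps_nth (Abs_fps c)) \<ge> norm (1::real)" by (rule conv_radius_geI)
  then show ?thesis unfolding fps_conv_radius_def by (simp add: one_ereal_def)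
qed



lemma infsum_eq_suminf_real:
  fixes f :: "nat \<Rightarrow> real"
  assumes "summable (\<lambda>n. \<bar>f n\<bar>)"
  shows "infsum f UNIV = suminf f"
proof -
  have s: "summable (\<lambda>n. norm (f n))" using assms by simp
  show ?thesis
    by (rule infsumI[OF norm_summable_imp_has_sum[OF s summable_sums[OF summable_norm_cancel[OF s]]]])
qed

lemma swap_sum:
  fixes a :: "nat \<Rightarrow> nat \<Rightarrow> real" and \<alpha> \<beta> :: "nat \<Rightarrow> real"
  assumes sa: "summable \<alpha>" and sb: "summable \<beta>" and a0: "\<And>k. \<alpha> k \<ge> 0" and b0: "\<And>m. \<beta> m \<ge> 0"
    and bound: "\<And>k m. \<bar>a k m\<bar> \<le> \<alpha> k * \<beta> m"
  shows "(\<Sum>k. \<Sum>m. a k m) = (\<Sum>N. \<Sum>k\<le>N. a k (N - k))"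
proof -
  have bsum: "\<beta> summable_on UNIV"
    using sb b0 summable_on_UNIV_nonneg_real_iff by blast
  have asum: "\<alpha> summable_on UNIV"
    using sa a0 summable_on_UNIV_nonneg_real_iff by blast
  have prod_abs: "(\<lambda>x. norm ((\<lambda>(k,m). \<alpha> k * \<beta> m) x)) summable_on (UNIV \<times> UNIV)"
  proof (subst Infinite_Sum.abs_summable_on_Sigma_iff, intro conjI ballI)
    fix k :: nat
    show "(\<lambda>m. norm (case (k, m) of (k, m) \<Rightarrow> \<alpha> k * \<beta> m)) summable_on UNIV"
      using summable_on_cmult_right[OF bsum, of "\<alpha> k"] a0 b0 by (simp add: abs_mult)
  next
    have "(\<lambda>k. infsum (\<lambda>m. norm (case (k, m) of (k, m) \<Rightarrow> \<alpha> k * \<beta> m)) UNIV)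
        = (\<lambda>k. \<alpha> k * infsum \<beta> UNIV)"
      using a0 b0 by (intro ext) (simp add: abs_mult infsum_cmult_right[OF bsum])
    moreover have "(\<lambda>k. norm (\<alpha> k * infsum \<beta> UNIV)) summable_on UNIV"
      using summable_on_cmult_left[OF asum, of "infsum \<beta> UNIV"] a0 b0 infsum_nonneg[of UNIV \<beta>]
      by (simp add: abs_mult)
    ultimately show "(\<lambda>k. norm (infsum (\<lambda>m. norm (case (k, m) of (k, m) \<Rightarrow> \<alpha> k * \<beta> m)) UNIV)) summable_on UNIV"
      by (simp only: prod.case) metis
  qed
  have a_abs: "(\<lambda>x. norm ((\<lambda>(k,m). a k m) x)) summable_on (UNIV \<times> UNIV)"
    by (rule Infinite_Sum.abs_summable_on_comparison_test[OF prod_abs]) (auto intro: order_trans[OF bound])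
  have a_sum: "(\<lambda>(k,m). a k m) summable_on (UNIV \<times> UNIV)"
    by (rule abs_summable_summable[OF a_abs])
  have row: "summable (\<lambda>m. \<bar>a k m\<bar>)" for k
    by (rule summable_comparison_test'[where N=0, OF summable_mult[OF sb, of "\<alpha> k"]]) (use bound in auto)
  have rowsum: "\<bar>\<Sum>m. a k m\<bar> \<le> \<alpha> k * suminf \<beta>" for k
  proof -
    have "\<bar>\<Sum>m. a k m\<bar> \<le> (\<Sum>m. \<bar>a k m\<bar>)" by (rule summable_rabs[OF row])
    also have "\<dots> \<le> (\<Sum>m. \<alpha> k * \<beta> m)"
      by (intro suminf_le row summable_mult[OF sb] bound allI)
    also have "\<dots> = \<alpha> k * suminf \<beta>" by (rule suminf_mult[OF sb])
    finally show ?thesis .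
  qed
  have outer: "summable (\<lambda>k. \<bar>\<Sum>m. a k m\<bar>)"
    by (rule summable_comparison_test'[where N=0, OF summable_mult2[OF sa, of "suminf \<beta>"]]) (use rowsum in auto)
  have "(\<Sum>k. \<Sum>m. a k m) = infsum (\<lambda>k. infsum (\<lambda>m. a k m) UNIV) UNIV"
    by (subst infsum_eq_suminf_real[OF row], subst infsum_eq_suminf_real[OF outer]) simp
  also have "\<dots> = infsum (\<lambda>(k,m). a k m) (UNIV \<times> UNIV)"
    by (rule infsum_Sigma'_banach[OF a_sum])
  also have "\<dots> = infsum (\<lambda>(N,k). a k (N - k)) (SIGMA N:UNIV. {..N})"
    by (rule infsum_reindex_bij_witness[where i="\<lambda>(N,k). (k, N - k)" and j="\<lambda>(k,m). (k + m, k)"]) auto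
  also have "\<dots> = infsum (\<lambda>N. infsum (\<lambda>k. a k (N - k)) {..N}) UNIV"
  proof -
    have "(\<lambda>(N,k). a k (N - k)) summable_on (SIGMA N:UNIV. {..N})"
      using a_sum
      by (subst summable_on_reindex_bij_witness[where j="\<lambda>(N,k). (k, N - k)" and i="\<lambda>(k,m). (k + m, k)" and T="UNIV \<times> UNIV"]) auto
    then show ?thesis using infsum_Sigma'_banach[of "\<lambda>N k. a k (N - k)" UNIV "\<lambda>N. {..N}"] by simp
  qed
  also have "\<dots> = infsum (\<lambda>N. \<Sum>k\<le>N. a k (N - k)) UNIV" by simp
  also have "\<dots> = (\<Sum>N. \<Sum>k\<le>N. a k (N - k))"
  proof -
    have "(\<lambda>(N,k). a k (N - k)) summable_on (SIGMA N:UNIV. {..N})"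
      using a_sum
      by (subst summable_on_reindex_bij_witness[where j="\<lambda>(N,k). (k, N - k)" and i="\<lambda>(k,m). (k + m, k)" and T="UNIV \<times> UNIV"]) auto
    then have "(\<lambda>N. infsum (\<lambda>k. a k (N - k)) {..N}) summable_on UNIV"
      using summable_on_Sigma_banach[of "\<lambda>N k. a k (N - k)" UNIV "\<lambda>N. {..N}"] by simp
    then have "(\<lambda>N. \<Sum>k\<le>N. a k (N - k)) summable_on UNIV" by simp
    then have "(\<lambda>N. norm (\<Sum>k\<le>N. a k (N - k))) summable_on UNIV"
      by (rule summable_on_iff_abs_summable_on_real[THEN iffD1])
    then have "summable (\<lambda>N. \<bar>\<Sum>k\<le>N. a k (N - k)\<bar>)"
      using summable_on_UNIV_nonneg_real_iff[of "\<lambda>N. \<bar>\<Sum>k\<le>N. a k (N - k)\<bar>"] by simp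
    then show ?thesis by (rule infsum_eq_suminf_real)
  qed
  finally show ?thesis .
qed



lemma fps_deriv_prod_log:
  fixes P G :: "nat \<Rightarrow> real fps"
  assumes "finite I" "\<And>i. i \<in> I \<Longrightarrow> fps_deriv (P i) = G i * P i"
  shows "fps_deriv (\<Prod>i\<in>I. P i) = (\<Sum>i\<in>I. G i) * (\<Prod>i\<in>I. P i)"
  using assms
proof (induction I rule: finite_induct)
  case empty
  then show ?case by simp
next
  case (insert a I)
  then show ?case by (simp add: fps_deriv_mult algebra_simps)
qed

lemma telescope_fdiff:
  "(\<Sum>l=1..k. fdiff h (j + l)) = h (j + k + 1) - h (j + 1)"
  by (induction k) (auto simp: fdiff_def)

lemma sum_measurable_nat:
  fixes \<xi> :: "nat \<Rightarrow> 'a \<Rightarrow> nat"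
  assumes "finite I" "\<And>i. i \<in> I \<Longrightarrow> \<xi> i \<in> measurable M (count_space UNIV)"
  shows "(\<lambda>\<omega>. \<Sum>i\<in>I. \<xi> i \<omega>) \<in> measurable M (count_space UNIV)"
  using assms
proof (induction I rule: finite_induct)
  case empty
  then show ?case by simp
next
  case (insert a I)
  have S: "(\<lambda>\<omega>. \<Sum>i\<in>I. \<xi> i \<omega>) \<in> measurable M (count_space UNIV)"
    using insert by auto
  have K: "\<And>k::nat. (\<lambda>\<omega>. k + (\<Sum>i\<in>I. \<xi> i \<omega>)) \<in> measurable M (count_space UNIV)"
    using measurable_compose[OF S, of "\<lambda>x. _ + x" "count_space UNIV"] by simp
  have "(\<lambda>\<omega>. \<xi> a \<omega> + (\<Sum>i\<in>I. \<xi> i \<omega>)) \<in> measurable M (count_space UNIV)"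
    using measurable_compose_countable[where f="\<lambda>k \<omega>. k + (\<Sum>i\<in>I. \<xi> i \<omega>)", OF K, of "\<xi> a"] insert by simp
  then show ?case using insert by simp
qed



lemma absmul_le: "\<bar>y\<bar> \<le> B \<Longrightarrow> \<bar>x\<bar> * \<bar>y\<bar> \<le> B * \<bar>x::real\<bar>"
  by (metis abs_ge_zero mult.commute mult_left_mono)

theorem proposition3p1:
  fixes M :: "'a measure" and n :: nat
    and \<xi> :: "nat \<Rightarrow> 'a \<Rightarrow> nat" and g :: "nat \<Rightarrow> nat \<Rightarrow> real"
    and W :: "'a \<Rightarrow> nat" and \<mu> :: real
  assumes "prob_space M"
    and indep: "prob_space.indep_vars M (\<lambda>_. count_space UNIV) \<xi> {1..n}"
    and abs_conv: "\<And>i. i \<in> {1..n} \<Longrightarrow> summable (\<lambda>j. \<bar>g i (j + 1)\<bar>)"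
    and pgf_ratio: "\<And>i w. i \<in> {1..n} \<Longrightarrow> \<bar>w\<bar> < 1 \<Longrightarrow>
        deriv (pgf M (\<xi> i)) w / pgf M (\<xi> i) w = (\<Sum>j. g i (j + 1) * w ^ j)"
    and W_def: "\<And>\<omega>. W \<omega> = (\<Sum>i=1..n. \<xi> i \<omega>)"
    and mu_def: "\<mu> = (\<Sum>i=1..n. \<Sum>j. g i (j + 1))"
    and h: "h \<in> H_class M W"
  shows "(\<integral>\<omega>. stein_op \<mu> n g h (W \<omega>) \<partial>M) = 0"
proof -
  interpret prob_space M by fact
  define I where "I = {1..n}"
  have finI: "finite I" by (simp add: I_def)
  define p where "p X k = measure M {\<omega>\<in>space M. X \<omega> = k}" for X :: "'a \<Rightarrow> nat" and k
  define P where "P X = Abs_fps (p X)" for X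
  have rv: "\<xi> i \<in> measurable M (count_space UNIV)" if "i \<in> I" for i
    using indep that unfolding indep_vars_def I_def by auto
  have Wfun: "W = (\<lambda>\<omega>. \<Sum>i\<in>I. \<xi> i \<omega>)" using W_def by (auto simp: I_def)
  have Wm: "W \<in> measurable M (count_space UNIV)"
    unfolding Wfun using finI rv by (rule sum_measurable_nat)
  have p_nonneg: "0 \<le> p X k" for X k by (simp add: p_def)
  have p_le1: "p X k \<le> 1" for X k by (simp add: p_def)
  have p_sums: "p X sums 1" if X: "X \<in> measurable M (count_space UNIV)" for X
  proof -
    define A where "A k = {\<omega>\<in>space M. X \<omega> = k}" for k
    have As: "A k \<in> sets M" for k
    proof -
      have "X -` {k} \<inter> space M \<in> sets M" using X by (rule measurable_sets) auto
      moreover have "X -` {k} \<inter> space M = A k" by (auto simp: A_def)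
      ultimately show ?thesis by simp
    qed
    have "(\<lambda>k. measure M (A k)) sums measure M (\<Union>k. A k)"
      by (rule finite_measure_UNION) (use As[unfolded A_def] in \<open>auto simp: disjoint_family_on_def A_def\<close>)
    moreover have "(\<Union>k. A k) = space M" by (auto simp: A_def)
    ultimately show ?thesis by (simp add: p_def[abs_def] A_def prob_space)
  qed
  have radP: "fps_conv_radius (P X) \<ge> 1" for X
    unfolding P_def using p_nonneg p_le1 by (intro radius_ge1_bounded) (simp add: abs_le_iff)
  have radP0: "fps_conv_radius (P X) > 0" for X
    by (rule less_le_trans[OF _ radP]) simp
  have pgf_eval: "pgf M X w = eval_fps (P X) w" and int_pow: "integrable M (\<lambda>\<omega>. w ^ X \<omega>)"
    if X: "X \<in> measurable M (count_space UNIV)" and w: "\<bar>w\<bar> < 1" for X w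
  proof -
    have S: "summable (\<lambda>k. \<bar>w ^ k\<bar> * p X k)"
    proof (rule summable_comparison_test'[where N=0])
      show "summable (\<lambda>k. \<bar>w\<bar> ^ k)" using w by (intro summable_geometric) simp
      fix k :: nat
      have "\<bar>w ^ k\<bar> * p X k \<le> \<bar>w ^ k\<bar> * 1" using p_nonneg p_le1 by (intro mult_left_mono) auto
      then show "norm (\<bar>w ^ k\<bar> * p X k) \<le> \<bar>w\<bar> ^ k" using p_nonneg by (simp add: power_abs)
    qed
    note L = L2[OF prob_space_axioms X, of "\<lambda>k. w ^ k", folded p_def, OF S]
    show "integrable M (\<lambda>\<omega>. w ^ X \<omega>)" by (rule L(1))
    show "pgf M X w = eval_fps (P X) w"
      unfolding pgf_def L(2) eval_fps_def P_def by (simp add: mult.commute)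
  qed
  have P_nz: "P X \<noteq> 0" if X: "X \<in> measurable M (count_space UNIV)" for X
  proof
    assume "P X = 0"
    then have "p X k = 0" for k unfolding P_def by (metis fps_zero_nth fps_nth_Abs_fps) 
    then have "p X = (\<lambda>_. 0)" by auto
    then have "p X sums 0" by simp
    with p_sums[OF X] show False using sums_unique2 by fastforce
  qed
  have pgf_prod: "pgf M W w = (\<Prod>i\<in>I. pgf M (\<xi> i) w)" if w: "\<bar>w\<bar> < 1" for w
  proof -
    have "pgf M W w = (\<integral>\<omega>. (\<Prod>i\<in>I. w ^ \<xi> i \<omega>) \<partial>M)"
      unfolding pgf_def Wfun by (simp add: power_sum)
    also have "\<dots> = (\<Prod>i\<in>I. \<integral>\<omega>. w ^ \<xi> i \<omega> \<partial>M)"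
    proof (rule indep_vars_lebesgue_integral[OF finI])
      have "indep_vars (\<lambda>_. borel) (\<lambda>i \<omega>. (\<lambda>k. w ^ k) (\<xi> i \<omega>)) I"
        using indep unfolding I_def[symmetric]
        by (rule indep_vars_compose2) simp
      then show "indep_vars (\<lambda>_. borel) (\<lambda>i \<omega>. w ^ \<xi> i \<omega>) I" by simp
      show "\<And>i. i \<in> I \<Longrightarrow> integrable M (\<lambda>\<omega>. w ^ \<xi> i \<omega>)"
        using int_pow[OF rv w] by blast
    qed
    finally show ?thesis unfolding pgf_def .
  qed
  have PW: "P W = (\<Prod>i\<in>I. P (\<xi> i))"
  proof -
    have "(\<lambda>z. \<Prod>i\<in>I. eval_fps (P (\<xi> i)) z) has_fps_expansion (\<Prod>i\<in>I. P (\<xi> i))"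
      by (intro has_fps_expansion_prod eval_fps_has_fps_expansion radP0)
    then have r: "fps_conv_radius (\<Prod>i\<in>I. P (\<xi> i)) > 0"
      and ev: "eventually (\<lambda>z. eval_fps (\<Prod>i\<in>I. P (\<xi> i)) z = (\<Prod>i\<in>I. eval_fps (P (\<xi> i)) z)) (nhds 0)"
      unfolding has_fps_expansion_def by auto
    have ev1: "eventually (\<lambda>z::real. \<bar>z\<bar> < 1) (nhds 0)"
    proof -
      have "eventually (\<lambda>z. z \<in> {-1<..<(1::real)}) (nhds 0)"
        by (intro topological_space_class.eventually_nhds_in_open) auto
      then show ?thesis by (rule eventually_mono) (auto simp: abs_less_iff)
    qed
    show ?thesis
    proof (rule fps_unique_real[OF radP0 r])
      have "eventually (\<lambda>z. eval_fps (P W) z = eval_fps (\<Prod>i\<in>I. P (\<xi> i)) z) (nhds 0)"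
        using ev ev1
      proof eventually_elim
        case (elim z)
        then show ?case
          using pgf_eval[OF Wm elim(2)] pgf_prod[OF elim(2)] pgf_eval[OF rv elim(2)] by simp
      qed
      then show "eventually (\<lambda>z. eval_fps (P W) z = eval_fps (\<Prod>i\<in>I. P (\<xi> i)) z) (at 0)"
        unfolding eventually_at_filter by (auto elim: eventually_mono)
    qed
  qed
  have lt1: "ereal (norm z) < F" if "\<bar>z\<bar> < 1" "F \<ge> 1" for z :: real and F :: ereal
    by (rule less_le_trans[OF _ that(2)]) (use that(1) in simp)
  define G where "G i = Abs_fps (\<lambda>j. g i (j + 1))" for i
  have radG: "fps_conv_radius (G i) \<ge> 1" if "i \<in> I" for i
    unfolding G_def using abs_conv[of i] that by (intro radius_ge1_abs_summable) (simp add: I_def)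
  have dP: "fps_deriv (P (\<xi> i)) = G i * P (\<xi> i)" if i: "i \<in> I" for i
  proof -
    let ?X = "\<xi> i"
    have r1: "fps_conv_radius (fps_deriv (P ?X)) > 0"
      using radP0[of ?X] fps_conv_radius_deriv[of "P ?X"] by (rule less_le_trans)
    have r2: "fps_conv_radius (G i * P ?X) > 0"
    proof -
      have "(1::ereal) \<le> min (fps_conv_radius (G i)) (fps_conv_radius (P ?X))"
        using radG[OF i] radP[of ?X] by simp
      also have "\<dots> \<le> fps_conv_radius (G i * P ?X)" by (rule fps_conv_radius_mult)
      finally show ?thesis by (rule less_le_trans[rotated]) simp
    qed
    have ev1: "eventually (\<lambda>z::real. \<bar>z\<bar> < 1) (at 0)"
    proof -
      have "eventually (\<lambda>z. z \<in> {-1<..<(1::real)}) (nhds 0)"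
        by (intro topological_space_class.eventually_nhds_in_open) auto
      then have "eventually (\<lambda>z::real. \<bar>z\<bar> < 1) (nhds 0)"
        by (rule eventually_mono) (auto simp: abs_less_iff)
      then show ?thesis unfolding eventually_at_filter by (auto elim: eventually_mono)
    qed
    have ev2: "eventually (\<lambda>z. eval_fps (P ?X) z \<noteq> 0) (at 0)"
      by (rule fps_eval_nonzero_near0[OF P_nz[OF rv[OF i]] radP0])
    show ?thesis
    proof (rule fps_unique_real[OF r1 r2])
      show "eventually (\<lambda>z. eval_fps (fps_deriv (P ?X)) z = eval_fps (G i * P ?X) z) (at 0)"
        using ev1 ev2
      proof eventually_elim
        case (elim z)
        have "(eval_fps (P ?X) has_field_derivative eval_fps (fps_deriv (P ?X)) z) (at z)"
          by (rule has_field_derivative_eval_fps) (rule lt1[OF elim(1) radP])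
        then have "(pgf M ?X has_field_derivative eval_fps (fps_deriv (P ?X)) z) (at z)"
        proof (rule has_field_derivative_transform_within_open[where S="{-1<..<1}"])
          show "z \<in> {-1<..<1}" using elim(1) by (auto simp: abs_less_iff)
          show "\<And>x. x \<in> {-1<..<1} \<Longrightarrow> eval_fps (P ?X) x = pgf M ?X x"
            using pgf_eval[OF rv[OF i]] by (auto simp: abs_less_iff)
        qed simp
        then have d: "deriv (pgf M ?X) z = eval_fps (fps_deriv (P ?X)) z"
          by (rule DERIV_imp_deriv)
        have e: "pgf M ?X z = eval_fps (P ?X) z" by (rule pgf_eval[OF rv[OF i] elim(1)])
        have "deriv (pgf M ?X) z / pgf M ?X z = eval_fps (G i) z"
          using pgf_ratio[of i z] i elim(1) by (simp add: I_def eval_fps_def G_def)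
        then have "eval_fps (fps_deriv (P ?X)) z = eval_fps (G i) z * eval_fps (P ?X) z"
          using elim(2) unfolding d e by (simp add: field_simps)
        also have "\<dots> = eval_fps (G i * P ?X) z"
          by (rule eval_fps_mult[symmetric]) (rule lt1[OF elim(1)], simp add: radG[OF i] radP)+
        finally show ?case .
      qed
    qed
  qed
  define c where "c j = (\<Sum>i\<in>I. g i (j + 1))" for j
  have sumG: "(\<Sum>i\<in>I. G i) = Abs_fps c"
    by (rule fps_ext) (simp add: fps_sum_nth G_def c_def)
  have dPW: "fps_deriv (P W) = Abs_fps c * P W"
    unfolding PW sumG[symmetric] by (rule fps_deriv_prod_log[OF finI dP])
  have rec: "real (Suc N) * p W (Suc N) = (\<Sum>m\<le>N. p W m * c (N - m))" for N
  proof -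
    have "fps_nth (fps_deriv (P W)) N = fps_nth (P W * Abs_fps c) N" unfolding dPW by (simp add: mult.commute)
    then show ?thesis by (simp add: fps_mult_nth P_def atLeast0AtMost)
  qed
  have c_abs: "summable (\<lambda>j. \<bar>c j\<bar>)"
  proof (rule summable_comparison_test'[where N=0])
    show "summable (\<lambda>j. \<Sum>i\<in>I. \<bar>g i (j + 1)\<bar>)"
      by (rule summable_sum) (use abs_conv in \<open>auto simp: I_def\<close>)
    fix j :: nat
    show "norm \<bar>c j\<bar> \<le> (\<Sum>i\<in>I. \<bar>g i (j + 1)\<bar>)"
      unfolding c_def by (simp add: sum_abs)
  qed
  have c_sum: "summable c" by (rule summable_rabs_cancel[OF c_abs])
  have g_sum: "summable (\<lambda>j. g i (j + 1))" if "i \<in> I" for i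
    using abs_conv[of i] that by (auto simp: I_def intro: summable_rabs_cancel)
  have mu_c: "\<mu> = suminf c"
    unfolding mu_def c_def I_def[symmetric] by (rule suminf_sum[symmetric]) (rule g_sum)
  obtain B where B: "\<And>j. \<bar>h j\<bar> \<le> B"
    using h unfolding H_class_def bounded_iff by auto
  have B0: "0 \<le> B" using B[of 0] by simp
  have ch_sum: "summable (\<lambda>k. c k * h (j + k + 1))" for j
  proof (rule summable_comparison_test'[where N=0])
    show "summable (\<lambda>k. B * \<bar>c k\<bar>)" by (rule summable_mult[OF c_abs])
    fix k show "norm (c k * h (j + k + 1)) \<le> B * \<bar>c k\<bar>"
      using absmul_le[OF B[of "j + k + 1"], of "c k"] by (simp add: abs_mult)
  qed
  have ch_bound: "\<bar>\<Sum>k. c k * h (j + k + 1)\<bar> \<le> B * (\<Sum>k. \<bar>c k\<bar>)" for j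
  proof -
    have s1: "summable (\<lambda>k. \<bar>c k * h (j + k + 1)\<bar>)"
    proof (rule summable_comparison_test'[where N=0])
      show "summable (\<lambda>k. B * \<bar>c k\<bar>)" by (rule summable_mult[OF c_abs])
      fix k show "norm \<bar>c k * h (j + k + 1)\<bar> \<le> B * \<bar>c k\<bar>"
        using absmul_le[OF B[of "j + k + 1"], of "c k"] by (simp add: abs_mult)
    qed
    have "\<bar>\<Sum>k. c k * h (j + k + 1)\<bar> \<le> (\<Sum>k. \<bar>c k * h (j + k + 1)\<bar>)" by (rule summable_rabs[OF s1])
    also have "\<dots> \<le> (\<Sum>k. B * \<bar>c k\<bar>)"
      by (rule suminf_le[OF _ s1 summable_mult[OF c_abs]])
         (use absmul_le[OF B] in \<open>simp add: abs_mult\<close>)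
    also have "\<dots> = B * (\<Sum>k. \<bar>c k\<bar>)" by (rule suminf_mult[OF c_abs])
    finally show ?thesis .
  qed
  have stein_eq: "stein_op \<mu> n g h j = (\<Sum>k. c k * h (j + k + 1)) - real j * h j" for j
  proof -
    have inner: "(\<Sum>l=1..k. g i (k + 1) * fdiff h (j + l)) = g i (k + 1) * (h (j + k + 1) - h (j + 1))" for i k
      using telescope_fdiff[of h j k] by (simp add: sum_distrib_left[symmetric])
    have gs: "summable (\<lambda>k. g i (k + 1) * (h (j + k + 1) - h (j + 1)))" if "i \<in> I" for i
    proof (rule summable_comparison_test'[where N=0])
      show "summable (\<lambda>k. (2 * B) * \<bar>g i (k + 1)\<bar>)" 
        by (rule summable_mult) (use abs_conv that in \<open>auto simp: I_def\<close>)
      fix k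
      have "\<bar>h (j + k + 1) - h (j + 1)\<bar> \<le> 2 * B" using B[of "j + k + 1"] B[of "j + 1"] by linarith
      then show "norm (g i (k + 1) * (h (j + k + 1) - h (j + 1))) \<le> (2 * B) * \<bar>g i (k + 1)\<bar>"
        using absmul_le[of "h (j + k + 1) - h (j + 1)" "2 * B" "g i (k + 1)"] by (simp add: abs_mult)
    qed
    have "(\<Sum>i=1..n. \<Sum>k. \<Sum>l=1..k. g i (k + 1) * fdiff h (j + l))
        = (\<Sum>i\<in>I. \<Sum>k. g i (k + 1) * (h (j + k + 1) - h (j + 1)))"
      unfolding inner I_def by (rule refl)
    also have "\<dots> = (\<Sum>k. \<Sum>i\<in>I. g i (k + 1) * (h (j + k + 1) - h (j + 1)))"
      by (rule suminf_sum[symmetric]) (rule gs)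
    also have "\<dots> = (\<Sum>k. c k * h (j + k + 1) - c k * h (j + 1))"
      by (intro suminf_cong) (simp add: c_def sum_distrib_right sum_distrib_left sum_subtractf algebra_simps)
    also have "\<dots> = (\<Sum>k. c k * h (j + k + 1)) - (\<Sum>k. c k * h (j + 1))"
      by (rule suminf_diff[symmetric]) (rule ch_sum, rule summable_mult2[OF c_sum])
    also have "(\<Sum>k. c k * h (j + 1)) = \<mu> * h (j + 1)"
      unfolding mu_c by (rule suminf_mult2[symmetric, OF c_sum])
    finally show ?thesis unfolding stein_op_def by simp
  qed
  define q where "q = p W"
  have q0: "0 \<le> q m" for m by (simp add: q_def p_nonneg)
  have q_sum: "summable q" using p_sums[OF Wm] unfolding q_def by (rule sums_summable)
  have rec': "real (Suc N) * q (Suc N) = (\<Sum>m\<le>N. q m * c (N - m))" for N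
    unfolding q_def by (rule rec)
  have mq_sum: "summable (\<lambda>m. real m * q m)"
  proof -
    have "summable (\<lambda>N. \<Sum>m\<le>N. q m * c (N - m))"
      by (rule summable_Cauchy_product) (use q_sum q0 c_abs in simp_all)
    then have "summable (\<lambda>N. real (Suc N) * q (Suc N))" by (simp only: rec')
    then show ?thesis by (subst summable_Suc_iff[symmetric]) simp
  qed
  define C where "C = (\<Sum>k. \<bar>c k\<bar>)"
  have C0: "0 \<le> C" unfolding C_def by (rule suminf_nonneg[OF c_abs]) simp
  define S where "S j = (\<Sum>k. c k * h (j + k + 1))" for j
  have S_bound: "\<bar>S j\<bar> \<le> B * C" for j unfolding S_def C_def by (rule ch_bound)
  have sum1: "summable (\<lambda>m. S m * q m)"
  proof (rule summable_comparison_test'[where N=0])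
    show "summable (\<lambda>m. (B * C) * q m)" by (rule summable_mult[OF q_sum])
    fix m show "norm (S m * q m) \<le> (B * C) * q m"
      using S_bound[of m] q0[of m] by (simp add: abs_mult mult_right_mono)
  qed
  have sum2: "summable (\<lambda>m. real m * h m * q m)"
  proof (rule summable_comparison_test'[where N=0])
    show "summable (\<lambda>m. B * (real m * q m))" by (rule summable_mult[OF mq_sum])
    fix m 
    have "\<bar>h m\<bar> * (real m * q m) \<le> B * (real m * q m)"
      using B[of m] q0[of m] by (intro mult_right_mono) auto
    then show "norm (real m * h m * q m) \<le> B * (real m * q m)"
      using q0[of m] by (simp add: abs_mult algebra_simps)
  qed
  have stein_sum: "summable (\<lambda>m. \<bar>stein_op \<mu> n g h m\<bar> * p W m)"
  proof (rule summable_comparison_test'[where N=0])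
    show "summable (\<lambda>m. (B * C) * q m + B * (real m * q m))"
      by (intro summable_add summable_mult q_sum mq_sum)
    fix m
    have "\<bar>stein_op \<mu> n g h m\<bar> \<le> \<bar>S m\<bar> + real m * \<bar>h m\<bar>"
      unfolding stein_eq S_def[symmetric] using abs_triangle_ineq4[of "S m" "real m * h m"] by (simp add: abs_mult)
    also have "\<dots> \<le> B * C + real m * B"
      using S_bound[of m] B[of m] by (intro add_mono mult_left_mono) auto
    finally have "\<bar>stein_op \<mu> n g h m\<bar> * q m \<le> (B * C + real m * B) * q m"
      using q0[of m] by (rule mult_right_mono)
    then show "norm (\<bar>stein_op \<mu> n g h m\<bar> * p W m) \<le> (B * C) * q m + B * (real m * q m)"
      using q0[of m] by (simp add: q_def[symmetric] abs_mult algebra_simps)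
  qed
  have "(\<integral>\<omega>. stein_op \<mu> n g h (W \<omega>) \<partial>M) = (\<Sum>m. stein_op \<mu> n g h m * q m)"
    unfolding q_def p_def by (rule L2(2)[OF prob_space_axioms Wm stein_sum[unfolded p_def]])
  also have "\<dots> = (\<Sum>m. S m * q m - real m * h m * q m)"
    by (simp add: stein_eq S_def algebra_simps)
  also have "\<dots> = (\<Sum>m. S m * q m) - (\<Sum>m. real m * h m * q m)"
    by (rule suminf_diff[symmetric, OF sum1 sum2])
  also have "(\<Sum>m. S m * q m) = (\<Sum>m. \<Sum>k. q m * (c k * h (m + k + 1)))"
  proof (intro suminf_cong)
    fix m
    show "S m * q m = (\<Sum>k. q m * (c k * h (m + k + 1)))"
      unfolding S_def using suminf_mult[OF ch_sum[of m], of "q m"] by (simp add: mult.commute)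
  qed
  also have "\<dots> = (\<Sum>N. \<Sum>m\<le>N. q m * (c (N - m) * h (m + (N - m) + 1)))"
  proof (rule swap_sum[where \<alpha>="\<lambda>m. B * q m" and \<beta>="\<lambda>k. \<bar>c k\<bar>"])
    show "summable (\<lambda>m. B * q m)" by (rule summable_mult[OF q_sum])
    show "summable (\<lambda>k. \<bar>c k\<bar>)" by (rule c_abs)
    show "\<And>m. 0 \<le> B * q m" using B0 q0 by simp
    show "\<And>k. 0 \<le> \<bar>c k\<bar>" by simp
    fix m k
    have "\<bar>c k\<bar> * \<bar>h (m + k + 1)\<bar> \<le> B * \<bar>c k\<bar>" by (rule absmul_le[OF B])
    then have "q m * (\<bar>c k\<bar> * \<bar>h (m + k + 1)\<bar>) \<le> q m * (B * \<bar>c k\<bar>)"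
      using q0[of m] by (rule mult_left_mono)
    then show "\<bar>q m * (c k * h (m + k + 1))\<bar> \<le> B * q m * \<bar>c k\<bar>"
      using q0[of m] by (simp add: abs_mult algebra_simps)
  qed
  also have "\<dots> = (\<Sum>N. real (Suc N) * h (Suc N) * q (Suc N))"
  proof (intro suminf_cong)
    fix N
    have "(\<Sum>m\<le>N. q m * (c (N - m) * h (m + (N - m) + 1))) = (\<Sum>m\<le>N. q m * c (N - m)) * h (Suc N)"
    proof -
      have "(\<Sum>m\<le>N. q m * (c (N - m) * h (m + (N - m) + 1))) = (\<Sum>m\<le>N. q m * c (N - m) * h (Suc N))"
        by (intro sum.cong refl) auto
      then show ?thesis by (simp add: sum_distrib_right)
    qed
    then show "(\<Sum>m\<le>N. q m * (c (N - m) * h (m + (N - m) + 1))) = real (Suc N) * h (Suc N) * q (Suc N)"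
      by (simp add: rec'[symmetric] algebra_simps)
  qed
  also have "\<dots> = (\<Sum>m. real m * h m * q m)"
    using suminf_split_head[OF sum2] by simp
  finally show ?thesis by simp
qed

end
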